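(* Let $G$ be a graph. Then $\varphi_r(G-v)=\varphi_r(G)+\lfloor |V(G)|/2\rfloor-2$ for every vertex $v\in V(G)$ if and only if one of the following holds: (i) $G$ is $P_2$ or $C_3$; (ii) $E(G)=\emptyset$ and $4\le|V(G)|\le5$; (iii) $4\le |V(G)|\le 5$ and $G$ contains two edges with no common endpoint but contains no induced b-$3$-atom.
   Context: $P_2$ is the path on two vertices (a single edge) and $C_3$ the triangle. A proper $k$-coloring of $G$ is a surjective map $c:V(G)\to\{1,\ldots,k\}$ with $c(u)\ne c(v)$ for every edge $uv$. In a proper $k$-coloring, a vertex of color $i$ is a b-vertex if it has a neighbor of every color $j\ne i$. A b-$k$-coloring is a proper $k$-coloring in which every color class contains a b-vertex; $\varphi(G)$ is the largest $k$ such that $G$ has a b-$k$-coloring, and $\varphi_r(G)=\max\{\varphi(H): H\text{ an induced subgraph of }G\}$. A b-$t$-atom is a graph $A$ whose vertex set can be partitioned into $t$ sets $D_1,\ldots,D_t$, each $D_i$ containing a special vertex $c_i$, such that each $D_i$ is independent with $|D_i|\le t$ and, for all $i\ne j$, $c_i$ has a neighbor in $D_j$. *)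

theory Defs
  imports Main
begin

definition graph :: "'a set \<Rightarrow> 'a set set \<Rightarrow> bool" where
  "graph V E \<longleftrightarrow> finite V \<and> (\<forall>e\<in>E. \<exists>u v. u \<noteq> v \<and> u \<in> V \<and> v \<in> V \<and> e = {u, v})"

definition induced_edges :: "'a set set \<Rightarrow> 'a set \<Rightarrow> 'a set set" where
  "induced_edges E S = {e \<in> E. e \<subseteq> S}"

definition del_edges :: "'a set set \<Rightarrow> 'a \<Rightarrow> 'a set set" where
  "del_edges E v = {e \<in> E. v \<notin> e}"

definition graph_iso :: "'a set \<Rightarrow> 'a set set \<Rightarrow> 'b set \<Rightarrow> 'b set set \<Rightarrow> bool" where
  "graph_iso V E V' E' \<longleftrightarrow> (\<exists>f. bij_betw f V V' \<and>
      (\<forall>u\<in>V. \<forall>v\<in>V. {u, v} \<in> E \<longleftrightarrow> {f u, f v} \<in> E'))"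

definition P2_V :: "nat set" where "P2_V = {0, 1}"
definition P2_E :: "nat set set" where "P2_E = {{0, 1}}"
definition C3_V :: "nat set" where "C3_V = {0, 1, 2}"
definition C3_E :: "nat set set" where "C3_E = {{0, 1}, {1, 2}, {0, 2}}"

definition proper_coloring :: "'a set \<Rightarrow> 'a set set \<Rightarrow> ('a \<Rightarrow> nat) \<Rightarrow> nat \<Rightarrow> bool" where
  "proper_coloring V E c k \<longleftrightarrow> c ` V = {1..k} \<and>
     (\<forall>u\<in>V. \<forall>v\<in>V. {u, v} \<in> E \<longrightarrow> c u \<noteq> c v)"

definition b_vertex :: "'a set \<Rightarrow> 'a set set \<Rightarrow> ('a \<Rightarrow> nat) \<Rightarrow> nat \<Rightarrow> 'a \<Rightarrow> bool" where
  "b_vertex V E c k v \<longleftrightarrow> v \<in> V \<and>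
     (\<forall>j\<in>{1..k}. j \<noteq> c v \<longrightarrow> (\<exists>u\<in>V. {u, v} \<in> E \<and> c u = j))"

definition b_coloring :: "'a set \<Rightarrow> 'a set set \<Rightarrow> ('a \<Rightarrow> nat) \<Rightarrow> nat \<Rightarrow> bool" where
  "b_coloring V E c k \<longleftrightarrow> proper_coloring V E c k \<and>
     (\<forall>i\<in>{1..k}. \<exists>v\<in>V. c v = i \<and> b_vertex V E c k v)"

definition b_chromatic :: "'a set \<Rightarrow> 'a set set \<Rightarrow> nat" where
  "b_chromatic V E = Max {k. \<exists>c. b_coloring V E c k}"

definition b_chromatic_r :: "'a set \<Rightarrow> 'a set set \<Rightarrow> nat" where
  "b_chromatic_r V E = Max {b_chromatic S (induced_edges E S) | S. S \<subseteq> V}"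

definition b_atom :: "'a set \<Rightarrow> 'a set set \<Rightarrow> nat \<Rightarrow> bool" where
  "b_atom V E t \<longleftrightarrow> (\<exists>(D :: nat \<Rightarrow> 'a set) (c :: nat \<Rightarrow> 'a).
      (\<Union>i\<in>{1..t}. D i) = V \<and>
      (\<forall>i\<in>{1..t}. \<forall>j\<in>{1..t}. i \<noteq> j \<longrightarrow> D i \<inter> D j = {}) \<and>
      (\<forall>i\<in>{1..t}. c i \<in> D i \<and> card (D i) \<le> t \<and>
          (\<forall>u\<in>D i. \<forall>w\<in>D i. {u, w} \<notin> E)) \<and>
      (\<forall>i\<in>{1..t}. \<forall>j\<in>{1..t}. i \<noteq> j \<longrightarrow> (\<exists>u\<in>D j. {c i, u} \<in> E)))"

end

theory Submission
  imports Defs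
begin

definition properish :: "'a set \<Rightarrow> 'a set set \<Rightarrow> ('a \<Rightarrow> nat) \<Rightarrow> bool" where
  "properish V E c \<longleftrightarrow> (\<forall>u\<in>V. \<forall>v\<in>V. {u, v} \<in> E \<longrightarrow> c u \<noteq> c v)"

definition bcol :: "'a set set \<Rightarrow> 'a set \<Rightarrow> nat \<Rightarrow> bool" where
  "bcol E A k \<longleftrightarrow> (\<exists>S\<subseteq>A. \<exists>c. b_coloring S (induced_edges E S) c k)"

definition clique :: "'a set set \<Rightarrow> 'a set \<Rightarrow> bool" where
  "clique E A \<longleftrightarrow> (\<forall>u\<in>A. \<forall>w\<in>A. u \<noteq> w \<longrightarrow> {u, w} \<in> E)"

lemma shift_colors:
  assumes "c ` S \<subseteq> {1..k} - {i}" "i \<in> {1..k}" "properish S E c"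
  shows "(\<lambda>x. if c x > i then c x - 1 else c x) ` S \<subseteq> {1..k-1} \<and>
         properish S E (\<lambda>x. if c x > i then c x - 1 else c x)"
proof
  show "(\<lambda>x. if c x > i then c x - 1 else c x) ` S \<subseteq> {1..k-1}"
  proof
    fix y assume "y \<in> (\<lambda>x. if c x > i then c x - 1 else c x) ` S"
    then obtain x where x: "x \<in> S" "y = (if c x > i then c x - 1 else c x)" by blast
    have "c x \<in> {1..k}" "c x \<noteq> i" using assms(1) x(1) by auto
    thus "y \<in> {1..k-1}" using x(2) assms(2) by auto
  qed
  show "properish S E (\<lambda>x. if c x > i then c x - 1 else c x)"
    unfolding properish_def
  proof (intro ballI impI)
    fix u v assume uv: "u \<in> S" "v \<in> S" "{u, v} \<in> E"
    have "c u \<noteq> c v" using assms(3) uv unfolding properish_def by blast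
    moreover have "c u \<noteq> i" "c v \<noteq> i" using assms(1) uv by auto
    ultimately show "(if c u > i then c u - 1 else c u) \<noteq> (if c v > i then c v - 1 else c v)"
      by auto
  qed
qed

lemma exists_bcoloring:
  assumes "finite S" "\<forall>u. {u} \<notin> E"
  shows "\<exists>k c. b_coloring S E c k"
proof -
  define P where "P k \<longleftrightarrow> (\<exists>c. c ` S \<subseteq> {1..k} \<and> properish S E c)" for k
  obtain h where h: "bij_betw h S {1..card S}"
    using finite_same_card_bij[OF assms(1), of "{1..card S}"] by auto
  have "P (card S)"
    unfolding P_def properish_def
  proof (intro exI conjI ballI impI)
    show "h ` S \<subseteq> {1..card S}" using h by (auto simp: bij_betw_def)
    fix u v assume uv: "u\<in>S" "v\<in>S" "{u,v}\<in>E"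
    hence "u\<noteq>v" using assms(2) by auto
    thus "h u \<noteq> h v" using h uv by (auto simp: bij_betw_def inj_on_def)
  qed
  define k where "k = (LEAST k. P k)"
  have Pk: "P k" unfolding k_def by (rule LeastI) (fact)
  have min: "\<And>j. j < k \<Longrightarrow> \<not> P j" unfolding k_def using not_less_Least by blast
  obtain c where c: "c ` S \<subseteq> {1..k}" "properish S E c" using Pk P_def by auto
  have surj: "c ` S = {1..k}"
  proof (rule ccontr)
    assume "c ` S \<noteq> {1..k}"
    then obtain i where i: "i \<in> {1..k}" "i \<notin> c ` S" using c(1) by blast
    hence "c ` S \<subseteq> {1..k} - {i}" using c(1) by auto
    from shift_colors[OF this i(1) c(2)] have "P (k-1)" unfolding P_def by blast
    moreover have "k - 1 < k" using i by auto
    ultimately show False using min by blast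
  qed
  have bv: "\<forall>i\<in>{1..k}. \<exists>v\<in>S. c v = i \<and> b_vertex S E c k v"
  proof (rule ccontr)
    assume "\<not> ?thesis"
    then obtain i where i: "i \<in> {1..k}" and nob: "\<forall>v\<in>S. c v = i \<longrightarrow> \<not> b_vertex S E c k v" by auto
    define miss where "miss v = (SOME j. j \<in> {1..k} \<and> j \<noteq> i \<and> \<not>(\<exists>u\<in>S. {u,v}\<in>E \<and> c u = j))" for v
    have miss: "miss v \<in> {1..k} \<and> miss v \<noteq> i \<and> \<not>(\<exists>u\<in>S. {u,v}\<in>E \<and> c u = miss v)"
      if "v\<in>S" "c v = i" for v
    proof -
      have "\<exists>j. j \<in> {1..k} \<and> j \<noteq> i \<and> \<not>(\<exists>u\<in>S. {u,v}\<in>E \<and> c u = j)"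
      proof -
        have "\<not> b_vertex S E c k v" using nob that by blast
        thus ?thesis using that unfolding b_vertex_def by blast
      qed
      thus ?thesis unfolding miss_def by (rule someI_ex)
    qed
    define c' where "c' v = (if c v = i then miss v else c v)" for v
    have img: "c' ` S \<subseteq> {1..k} - {i}" using miss c(1) surj unfolding c'_def by auto
    have pc': "properish S E c'"
      unfolding properish_def
    proof (intro ballI impI)
      fix u v assume uv: "u\<in>S" "v\<in>S" "{u,v}\<in>E"
      have cuv: "c u \<noteq> c v" using c(2) uv unfolding properish_def by blast
      have vu: "{v,u} \<in> E" using uv(3) by (simp add: insert_commute)
      show "c' u \<noteq> c' v"
      proof (cases "c u = i")
        case True
        hence "c v \<noteq> i" using cuv by simp
        moreover have "c v \<noteq> miss u" using miss[OF uv(1) True] uv(2) vu by blast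
        ultimately show ?thesis using True unfolding c'_def by simp
      next
        case False
        show ?thesis
        proof (cases "c v = i")
          case True
          have "c u \<noteq> miss v" using miss[OF uv(2) True] uv(1) uv(3) by blast
          thus ?thesis using True False unfolding c'_def by simp
        next
          case False2: False
          thus ?thesis using False cuv unfolding c'_def by simp
        qed
      qed
    qed
    have "P (k-1)" using shift_colors[OF img i pc'] unfolding P_def by blast
    moreover have "k-1<k" using i by auto
    ultimately show False using min by blast
  qed
  have "b_coloring S E c k" unfolding b_coloring_def proper_coloring_def
    using surj c(2) bv unfolding properish_def by blast
  thus ?thesis by blast
qed

lemma bcoloring_le_card: "b_coloring S E c k \<Longrightarrow> finite S \<Longrightarrow> k \<le> card S"
  unfolding b_coloring_def proper_coloring_def
  by (metis card_atLeastAtMost card_image_le diff_Suc_1)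

lemma bchrom_ge: "finite S \<Longrightarrow> b_coloring S E c k \<Longrightarrow> k \<le> b_chromatic S E"
  unfolding b_chromatic_def
  apply (rule Max_ge)
   apply (rule finite_subset[of _ "{..card S}"])
  using bcoloring_le_card by auto

lemma bchrom_wit: "finite S \<Longrightarrow> \<forall>u. {u}\<notin>E \<Longrightarrow> \<exists>c. b_coloring S E c (b_chromatic S E)"
proof -
  assume a: "finite S" "\<forall>u. {u}\<notin>E"
  have fin: "finite {k. \<exists>c. b_coloring S E c k}"
    apply (rule finite_subset[of _ "{..card S}"])
    using bcoloring_le_card a by auto
  have "{k. \<exists>c. b_coloring S E c k} \<noteq> {}" using exists_bcoloring[OF a] by auto
  from Max_in[OF fin this] show ?thesis unfolding b_chromatic_def by auto
qed

lemma ind_ind: "T \<subseteq> S \<Longrightarrow> induced_edges (induced_edges E S) T = induced_edges E T"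
  by (auto simp: induced_edges_def)

lemma phir_ge:
  assumes "finite V" "bcol E V k" shows "k \<le> b_chromatic_r V E"
proof -
  obtain S c where S: "S \<subseteq> V" "b_coloring S (induced_edges E S) c k" using assms(2) unfolding bcol_def by blast
  have "k \<le> b_chromatic S (induced_edges E S)"
    using bchrom_ge[OF finite_subset[OF S(1) assms(1)] S(2)] .
  also have "\<dots> \<le> b_chromatic_r V E" unfolding b_chromatic_r_def
  proof (rule Max_ge)
    have "{b_chromatic S (induced_edges E S) |S. S \<subseteq> V} = (\<lambda>S. b_chromatic S (induced_edges E S)) ` Pow V"
      by auto
    thus "finite {b_chromatic S (induced_edges E S) |S. S \<subseteq> V}" using assms(1) by simp
    show "b_chromatic S (induced_edges E S) \<in> {b_chromatic S (induced_edges E S) |S. S \<subseteq> V}"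
      using S(1) by blast
  qed
  finally show ?thesis .
qed

lemma phir_wit:
  assumes "finite V" "\<forall>u. {u} \<notin> E" shows "bcol E V (b_chromatic_r V E)"
proof -
  have eq: "{b_chromatic S (induced_edges E S) |S. S \<subseteq> V} = (\<lambda>S. b_chromatic S (induced_edges E S)) ` Pow V"
    by auto
  have "finite {b_chromatic S (induced_edges E S) |S. S \<subseteq> V}" unfolding eq using assms(1) by simp
  moreover have "{b_chromatic S (induced_edges E S) |S. S \<subseteq> V} \<noteq> {}" by blast
  ultimately have "b_chromatic_r V E \<in> {b_chromatic S (induced_edges E S) |S. S \<subseteq> V}"
    unfolding b_chromatic_r_def by (rule Max_in)
  then obtain S where S: "S \<subseteq> V" "b_chromatic_r V E = b_chromatic S (induced_edges E S)" by blast
  have "\<forall>u. {u} \<notin> induced_edges E S" using assms(2) by (auto simp: induced_edges_def)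
  from bchrom_wit[OF finite_subset[OF S(1) assms(1)] this] S show ?thesis
    unfolding bcol_def by auto
qed


lemma bcol_mono: "bcol E A k \<Longrightarrow> A \<subseteq> B \<Longrightarrow> bcol E B k"
  unfolding bcol_def by blast

lemma bcol_down:
  assumes "bcol E A k" "1 \<le> k"
  shows "bcol E (A - {v}) (k - 1)"
proof -
  obtain S c where S: "S \<subseteq> A" "b_coloring S (induced_edges E S) c k"
    using assms(1) unfolding bcol_def by blast
  have img: "c ` S = {1..k}" and prp: "\<forall>u\<in>S. \<forall>w\<in>S. {u,w} \<in> induced_edges E S \<longrightarrow> c u \<noteq> c w"
    and bv: "\<forall>j\<in>{1..k}. \<exists>w\<in>S. c w = j \<and> b_vertex S (induced_edges E S) c k w"
    using S(2) unfolding b_coloring_def proper_coloring_def by auto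
  define i where "i = (if v \<in> S then c v else 1)"
  have i: "i \<in> {1..k}" using img assms(2) unfolding i_def by auto
  define S' where "S' = {x\<in>S. c x \<noteq> i}"
  define sh where "sh a = (if a > i then a - 1 else a)" for a :: nat
  define un where "un b = (if b \<ge> i then b + 1 else b)" for b :: nat
  have sh1: "sh a \<in> {1..k-1}" if "a \<in> {1..k}" "a \<noteq> i" for a
    using that i unfolding sh_def by auto
  have un1: "un b \<in> {1..k}" "un b \<noteq> i" "sh (un b) = b" if "b \<in> {1..k-1}" for b
    using that i unfolding sh_def un_def by auto
  have shinj: "sh a = sh b \<longleftrightarrow> a = b" if "a \<noteq> i" "b \<noteq> i" for a b
    using that unfolding sh_def by auto
  define c' where "c' x = sh (c x)" for x
  have sub: "S' \<subseteq> A - {v}" using S(1) unfolding S'_def i_def by auto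
  have indsub: "{u,w} \<in> induced_edges E S'" if "{u,w} \<in> induced_edges E S" "u \<in> S'" "w \<in> S'" for u w
    using that unfolding induced_edges_def S'_def by auto
  have indsub2: "{u,w} \<in> induced_edges E S" if "{u,w} \<in> induced_edges E S'" for u w
    using that unfolding induced_edges_def S'_def by auto
  have "b_coloring S' (induced_edges E S') c' (k-1)"
    unfolding b_coloring_def proper_coloring_def
  proof (intro conjI ballI impI)
    show "c' ` S' = {1..k-1}"
    proof
      show "c' ` S' \<subseteq> {1..k-1}"
      proof
        fix y assume "y \<in> c' ` S'"
        then obtain x where x: "x \<in> S'" "y = c' x" by blast
        have "c x \<in> {1..k}" using img x(1) unfolding S'_def by blast
        moreover have "c x \<noteq> i" using x(1) unfolding S'_def by blast
        ultimately show "y \<in> {1..k-1}" using sh1 x(2) unfolding c'_def by blast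
      qed
      show "{1..k-1} \<subseteq> c' ` S'"
      proof
        fix b assume b: "b \<in> {1..k-1}"
        have "un b \<in> c ` S" using un1(1)[OF b] img by simp
        then obtain x where x: "x \<in> S" "c x = un b" by auto
        hence "x \<in> S'" using un1(2)[OF b] unfolding S'_def by auto
        moreover have "c' x = b" using x un1(3)[OF b] unfolding c'_def by simp
        ultimately show "b \<in> c' ` S'" by blast
      qed
    qed
  next
    fix u w assume uw: "u \<in> S'" "w \<in> S'" "{u,w} \<in> induced_edges E S'"
    have "c u \<noteq> c w" using prp indsub2[OF uw(3)] uw(1,2) unfolding S'_def by blast
    moreover have "c u \<noteq> i" "c w \<noteq> i" using uw unfolding S'_def by auto
    ultimately show "c' u \<noteq> c' w" unfolding c'_def using shinj by blast
  next
    fix b assume b: "b \<in> {1..k-1}"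
    obtain w where w: "w \<in> S" "c w = un b" "b_vertex S (induced_edges E S) c k w"
      using bv un1(1)[OF b] by blast
    have wS': "w \<in> S'" using w un1(2)[OF b] unfolding S'_def by auto
    have cw: "c' w = b" using w(2) un1(3)[OF b] unfolding c'_def by simp
    show "\<exists>w\<in>S'. c' w = b \<and> b_vertex S' (induced_edges E S') c' (k-1) w"
    proof (intro bexI conjI)
      show "c' w = b" by (rule cw)
      show "b_vertex S' (induced_edges E S') c' (k-1) w" unfolding b_vertex_def
      proof (intro conjI ballI impI)
        show "w \<in> S'" by (rule wS')
        fix l assume l: "l \<in> {1..k-1}" "l \<noteq> c' w"
        have "un l \<noteq> c w" using w(2) cw l un1(3)[OF l(1)] un1(3)[OF b] by metis
        then obtain u where u: "u\<in>S" "{u,w} \<in> induced_edges E S" "c u = un l"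
          using w(3) un1(1)[OF l(1)] unfolding b_vertex_def by blast
        have uS': "u \<in> S'" using u un1(2)[OF l(1)] unfolding S'_def by auto
        moreover have "{u,w} \<in> induced_edges E S'" using indsub[OF u(2) uS' wS'] .
        moreover have "c' u = l" using u(3) un1(3)[OF l(1)] unfolding c'_def by simp
        ultimately show "\<exists>u\<in>S'. {u, w} \<in> induced_edges E S' \<and> c' u = l" by blast
      qed
    qed (rule wS')
  qed
  thus ?thesis using sub unfolding bcol_def by blast
qed

lemma bcol_down_le: "bcol E A k \<Longrightarrow> j \<le> k \<Longrightarrow> bcol E A j"
proof (induction "k - j" arbitrary: k)
  case 0 then show ?case by simp
next
  case (Suc d)
  have k1: "1 \<le> k" using Suc.hyps(2) by simp
  have "bcol E (A - {undefined}) (k-1)" using bcol_down[OF Suc.prems(1) k1] .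
  then have "bcol E A (k-1)" using bcol_mono Diff_subset by metis
  moreover have "d = (k - 1) - j" using Suc.hyps(2) by simp
  moreover have "j \<le> k - 1" using Suc.hyps(2) by simp
  ultimately show ?case using Suc.hyps(1) by blast
qed

lemma bcol_edge:
  assumes "{u,w}\<in>E" "u \<noteq> w" "u\<in>A" "w\<in>A" "\<forall>x. {x} \<notin> E"
  shows "bcol E A 2"
proof -
  define c where "c x = (if x = u then 1 else 2::nat)" for x
  have cu: "c u = 1" and cw: "c w = 2" using assms(2) unfolding c_def by auto
  have e1: "{u,w} \<in> induced_edges E {u,w}" and e2: "{w,u} \<in> induced_edges E {u,w}"
    using assms(1) unfolding induced_edges_def by (auto simp: insert_commute)
  have "b_coloring {u,w} (induced_edges E {u,w}) c 2"
    unfolding b_coloring_def proper_coloring_def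
  proof (intro conjI ballI impI)
    show "c ` {u, w} = {1..2}" using cu cw by auto
    fix x y assume xy: "x \<in> {u,w}" "y \<in> {u,w}" "{x,y} \<in> induced_edges E {u,w}"
    have "x \<noteq> y" using xy(3) assms(5) unfolding induced_edges_def by auto
    thus "c x \<noteq> c y" using xy(1,2) cu cw by auto
  next
    fix i :: nat assume i: "i \<in> {1..2}"
    have bu: "b_vertex {u,w} (induced_edges E {u,w}) c 2 u" unfolding b_vertex_def
    proof (intro conjI ballI impI)
      fix j :: nat assume "j \<in> {1..2}" "j \<noteq> c u"
      hence "j = 2" using cu by auto
      thus "\<exists>x\<in>{u,w}. {x, u} \<in> induced_edges E {u,w} \<and> c x = j" using e2 cw by blast
    qed simp
    have bw: "b_vertex {u,w} (induced_edges E {u,w}) c 2 w" unfolding b_vertex_def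
    proof (intro conjI ballI impI)
      fix j :: nat assume "j \<in> {1..2}" "j \<noteq> c w"
      hence "j = 1" using cw by auto
      thus "\<exists>x\<in>{u,w}. {x, w} \<in> induced_edges E {u,w} \<and> c x = j" using e1 cu by blast
    qed simp
    have "i = 1 \<or> i = 2" using i by auto
    thus "\<exists>v\<in>{u,w}. c v = i \<and> b_vertex {u,w} (induced_edges E {u,w}) c 2 v"
      using bu bw cu cw by blast
  qed
  moreover have "{u,w} \<subseteq> A" using assms(3,4) by simp
  ultimately show ?thesis unfolding bcol_def by blast
qed

lemma bcol_one:
  assumes "a \<in> A" "\<forall>x. {x} \<notin> E" shows "bcol E A 1"
proof -
  have "b_coloring {a} (induced_edges E {a}) (\<lambda>_. 1) 1"
    unfolding b_coloring_def proper_coloring_def b_vertex_def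
    using assms(2) unfolding induced_edges_def by auto
  moreover have "{a} \<subseteq> A" using assms(1) by simp
  ultimately show ?thesis unfolding bcol_def by blast
qed

lemma bcol_two_edge:
  assumes "bcol E A k" "2 \<le> k" shows "\<exists>u\<in>A. \<exists>w\<in>A. {u,w} \<in> E"
proof -
  obtain S c where S: "S \<subseteq> A" "b_coloring S (induced_edges E S) c k"
    using assms(1) unfolding bcol_def by blast
  have "(1::nat) \<in> {1..k}" using assms(2) by simp
  then obtain w where w: "w\<in>S" "c w = 1" "b_vertex S (induced_edges E S) c k w"
    using S(2) unfolding b_coloring_def by blast
  moreover have "(2::nat) \<in> {1..k}" "(2::nat) \<noteq> c w" using assms(2) w(2) by auto
  ultimately obtain u where "u\<in>S" "{u,w} \<in> induced_edges E S"
    unfolding b_vertex_def by blast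
  thus ?thesis using S(1) w(1) unfolding induced_edges_def by blast
qed

lemma bcol_card: "finite A \<Longrightarrow> bcol E A k \<Longrightarrow> k \<le> card A"
  unfolding bcol_def by (meson bcoloring_le_card card_mono finite_subset le_trans)

lemma bcol_clique:
  assumes "finite A" "bcol E A k" "card A \<le> k" shows "clique E A"
proof -
  obtain S c where S: "S \<subseteq> A" "b_coloring S (induced_edges E S) c k"
    using assms(2) unfolding bcol_def by blast
  have fS: "finite S" using S(1) assms(1) finite_subset by blast
  have "k \<le> card S" using bcoloring_le_card[OF S(2) fS] .
  moreover have "card S \<le> card A" using card_mono[OF assms(1) S(1)] .
  ultimately have SA: "S = A" and cS: "card S = k" using card_subset_eq[OF assms(1) S(1)] assms(3) by auto
  have img: "c ` S = {1..k}" using S(2) unfolding b_coloring_def proper_coloring_def by auto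
  hence "card (c ` S) = card S" using cS by simp
  hence inj: "inj_on c S" using eq_card_imp_inj_on[OF fS] by blast
  show ?thesis unfolding clique_def
  proof (intro ballI impI)
    fix u w assume uw: "u \<in> A" "w \<in> A" "u \<noteq> w"
    have cuw: "c u \<noteq> c w" using inj uw SA unfolding inj_on_def by blast
    have "c w \<in> {1..k}" using img uw SA by auto
    moreover have "\<forall>i\<in>{1..k}. \<exists>v\<in>S. c v = i \<and> b_vertex S (induced_edges E S) c k v"
      using S(2) unfolding b_coloring_def by blast
    ultimately obtain x where x: "x \<in> S" "c x = c w" "b_vertex S (induced_edges E S) c k x"
      by blast
    have "x = w" using inj x uw SA unfolding inj_on_def by blast
    moreover have "c u \<in> {1..k}" using img uw SA by auto
    ultimately obtain y where y: "y \<in> S" "{y, w} \<in> induced_edges E S" "c y = c u"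
      using x(3) cuw unfolding b_vertex_def by blast
    have "y = u" using inj y uw SA unfolding inj_on_def by blast
    thus "{u,w} \<in> E" using y(2) unfolding induced_edges_def by auto
  qed
qed

lemma clique_bcol:
  assumes "finite A" "\<forall>x. {x} \<notin> E" "clique E A" shows "bcol E A (card A)"
proof -
  obtain h where h: "bij_betw h A {1..card A}"
    using finite_same_card_bij[OF assms(1), of "{1..card A}"] by auto
  have img: "h ` A = {1..card A}" using h by (simp add: bij_betw_def)
  have inj: "inj_on h A" using h by (simp add: bij_betw_def)
  have "b_coloring A (induced_edges E A) h (card A)"
    unfolding b_coloring_def proper_coloring_def
  proof (intro conjI ballI impI)
    show "h ` A = {1..card A}" by (rule img)
    fix u w assume uw: "u \<in> A" "w \<in> A" "{u,w} \<in> induced_edges E A"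
    hence "u \<noteq> w" using assms(2) unfolding induced_edges_def by auto
    thus "h u \<noteq> h w" using inj uw unfolding inj_on_def by blast
  next
    fix i assume i: "i \<in> {1..card A}"
    then obtain x where x: "x \<in> A" "h x = i" using img by (metis imageE)
    have "b_vertex A (induced_edges E A) h (card A) x" unfolding b_vertex_def
    proof (intro conjI ballI impI)
      show "x \<in> A" by (rule x(1))
      fix j assume j: "j \<in> {1..card A}" "j \<noteq> h x"
      then obtain u where u: "u \<in> A" "h u = j" using img by (metis imageE)
      have "u \<noteq> x" using u j by auto
      hence "{u,x} \<in> induced_edges E A" using assms(3) u x unfolding clique_def induced_edges_def by auto
      thus "\<exists>u\<in>A. {u, x} \<in> induced_edges E A \<and> h u = j" using u by blast
    qed
    thus "\<exists>v\<in>A. h v = i \<and> b_vertex A (induced_edges E A) h (card A) v" using x by blast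
  qed
  thus ?thesis unfolding bcol_def by blast
qed


lemma five_core:
  fixes ab ac ad ae bc bd be cd ce de :: bool
  assumes "(bc \<and> bd \<and> cd) \<or> (bc \<and> be \<and> ce) \<or> (bd \<and> be \<and> de) \<or> (cd \<and> ce \<and> de)"
  "(ac\<and>ad\<and>cd) \<or> (ac\<and>ae\<and>ce) \<or> (ad\<and>ae\<and>de) \<or> (cd\<and>ce\<and>de)"
  "(ab\<and>ad\<and>bd) \<or> (ab\<and>ae\<and>be) \<or> (ad\<and>ae\<and>de) \<or> (bd\<and>be\<and>de)"
  "(ab\<and>ac\<and>bc) \<or> (ab\<and>ae\<and>be) \<or> (ac\<and>ae\<and>ce) \<or> (bc\<and>be\<and>ce)"
  "(ab\<and>ac\<and>bc) \<or> (ab\<and>ad\<and>bd) \<or> (ac\<and>ad\<and>cd) \<or> (bc\<and>bd\<and>cd)"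
  "\<not>(bc\<and>bd\<and>be\<and>cd\<and>ce\<and>de)" "\<not>(ac\<and>ad\<and>ae\<and>cd\<and>ce\<and>de)" "\<not>(ab\<and>ad\<and>ae\<and>bd\<and>be\<and>de)"
  "\<not>(ab\<and>ac\<and>ae\<and>bc\<and>be\<and>ce)" "\<not>(ab\<and>ac\<and>ad\<and>bc\<and>bd\<and>cd)"
  shows False
  using assms by argo

lemma tri4:
  assumes "x\<in>{p,q,r,s}" "y\<in>{p,q,r,s}" "z\<in>{p,q,r,s}" "x\<noteq>y" "y\<noteq>z" "x\<noteq>z"
    "{x,y}\<in>E" "{y,z}\<in>E" "{x,z}\<in>E"
  shows "({p,q}\<in>E \<and> {p,r}\<in>E \<and> {q,r}\<in>E) \<or> ({p,q}\<in>E \<and> {p,s}\<in>E \<and> {q,s}\<in>E) \<or>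
         ({p,r}\<in>E \<and> {p,s}\<in>E \<and> {r,s}\<in>E) \<or> ({q,r}\<in>E \<and> {q,s}\<in>E \<and> {r,s}\<in>E)"
  using assms(1-3) apply (elim insertE emptyE)
  using assms(4-) by (simp_all add: insert_commute)

lemma card5:
  assumes "card V = 5" shows "\<exists>a b c d e. V = {a,b,c,d,e} \<and> distinct [a,b,c,d,e]"
proof -
  have c0: "card V = Suc 4" using assms by simp
  obtain a B1 where 1: "V = insert a B1" "a \<notin> B1" "card B1 = Suc 3" using card_eq_SucD[OF c0] by auto
  obtain b B2 where 2: "B1 = insert b B2" "b \<notin> B2" "card B2 = Suc 2" using card_eq_SucD[OF 1(3)] by auto
  obtain c B3 where 3: "B2 = insert c B3" "c \<notin> B3" "card B3 = Suc 1" using card_eq_SucD[OF 2(3)] by auto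
  obtain d B4 where 4: "B3 = insert d B4" "d \<notin> B4" "card B4 = Suc 0" using card_eq_SucD[OF 3(3)] by auto
  obtain e where 5: "B4 = {e}" using card_1_singletonE 4(3) by auto
  have B3: "B3 = {d,e}" using 4(1) 5 by simp
  have B2: "B2 = {c,d,e}" using 3(1) B3 by simp
  have B1: "B1 = {b,c,d,e}" using 2(1) B2 by simp
  have "V = {a,b,c,d,e}" using 1(1) B1 by simp
  moreover have "distinct [a,b,c,d,e]" using 1(2) 2(2) 3(2) 4(2) 5 B1 B2 B3 by simp
  ultimately show ?thesis by blast
qed


lemma tri_helper:
  assumes bw: "\<And>j. j \<in> {1..3} \<Longrightarrow> w j \<in> S \<and> c (w j) = j \<and> b_vertex S F c 3 (w j)"
    and abc: "a \<in> {1..3}" "b \<in> {1..3}" "d \<in> {1..3::nat}" "a\<noteq>b" "b\<noteq>d" "a\<noteq>d"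
    and sa: "\<forall>x\<in>S. c x = a \<longrightarrow> x = w a" and sb: "\<forall>x\<in>S. c x = b \<longrightarrow> x = w b"
  shows "{w a, w b} \<in> F \<and> {w b, w d} \<in> F \<and> {w a, w d} \<in> F"
proof -
  have A: "c (w a) = a" "b_vertex S F c 3 (w a)" using bw abc(1) by auto
  have D: "c (w d) = d" "b_vertex S F c 3 (w d)" using bw abc(3) by auto
  obtain u1 where u1: "u1\<in>S" "{u1, w a}\<in>F" "c u1 = b"
  proof -
    have "b \<noteq> c (w a)" using A(1) abc(4) by simp
    thus ?thesis using that A(2) abc(2) unfolding b_vertex_def by blast
  qed
  obtain u2 where u2: "u2\<in>S" "{u2, w d}\<in>F" "c u2 = a"
  proof -
    have "a \<noteq> c (w d)" using D(1) abc(6) by simp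
    thus ?thesis using that D(2) abc(1) unfolding b_vertex_def by blast
  qed
  obtain u3 where u3: "u3\<in>S" "{u3, w d}\<in>F" "c u3 = b"
  proof -
    have "b \<noteq> c (w d)" using D(1) abc(5) by simp
    thus ?thesis using that D(2) abc(2) unfolding b_vertex_def by blast
  qed
  have "u1 = w b" using u1(1,3) sb by blast
  moreover have "u2 = w a" using u2(1,3) sa by blast
  moreover have "u3 = w b" using u3(1,3) sb by blast
  ultimately have "u1 = w b" "u2 = w a" "u3 = w b" by auto
  thus ?thesis using u1 u2 u3 by (simp add: insert_commute)
qed

lemma bcol3_small:
  assumes "finite A" "card A \<le> 4" "bcol E A 3"
  shows "\<exists>x\<in>A. \<exists>y\<in>A. \<exists>z\<in>A. x\<noteq>y \<and> y\<noteq>z \<and> x\<noteq>z \<and> {x,y}\<in>E \<and> {y,z}\<in>E \<and> {x,z}\<in>E"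
proof -
  obtain S c where S: "S \<subseteq> A" "b_coloring S (induced_edges E S) c 3"
    using assms(3) unfolding bcol_def by blast
  have fS: "finite S" using S(1) assms(1) finite_subset by blast
  have cS: "card S \<le> 4" using card_mono[OF assms(1) S(1)] assms(2) by simp
  have "\<forall>j\<in>{1..3::nat}. \<exists>v. v\<in>S \<and> c v = j \<and> b_vertex S (induced_edges E S) c 3 v"
    using S(2) unfolding b_coloring_def by blast
  from bchoice[OF this] obtain w where
    w0: "\<forall>j\<in>{1..3::nat}. w j \<in> S \<and> c (w j) = j \<and> b_vertex S (induced_edges E S) c 3 (w j)" by blast
  hence w: "\<And>j. j \<in> {1..3} \<Longrightarrow> w j \<in> S \<and> c (w j) = j \<and> b_vertex S (induced_edges E S) c 3 (w j)"
    by blast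
  define sing where "sing j \<longleftrightarrow> (\<forall>x\<in>S. c x = j \<longrightarrow> x = w j)" for j
  have key: False if j: "j \<in> {1..3}" "l \<in> {1..3}" "j \<noteq> l" "\<not> sing j" "\<not> sing l" for j l
  proof -
    obtain x where x: "x \<in> S" "c x = j" "x \<noteq> w j" using j(4) unfolding sing_def by blast
    obtain y where y: "y \<in> S" "c y = l" "y \<noteq> w l" using j(5) unfolding sing_def by blast
    have xw: "x \<notin> w ` {1..3}"
    proof
      assume "x \<in> w ` {1..3}"
      then obtain m where m: "m \<in> {1..3}" "x = w m" by blast
      hence "c x = m" using w by blast
      hence "m = j" using x(2) by simp
      thus False using m x(3) by simp
    qed
    have yw: "y \<notin> w ` {1..3}"
    proof
      assume "y \<in> w ` {1..3}"
      then obtain m where m: "m \<in> {1..3}" "y = w m" by blast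
      hence "c y = m" using w by blast
      hence "m = l" using y(2) by simp
      thus False using m y(3) by simp
    qed
    have xy: "x \<noteq> y" using x(2) y(2) j(3) by auto
    have inj: "inj_on w {1..3}"
      unfolding inj_on_def using w by metis
    have cw: "card (w ` {1..3}) = 3" using card_image[OF inj] by simp
    have "card (insert x (insert y (w ` {1..3}))) = 5" using xw yw xy cw by simp
    moreover have "insert x (insert y (w ` {1..3})) \<subseteq> S" using x(1) y(1) w by blast
    ultimately have "5 \<le> card S" using card_mono[OF fS] by metis
    thus False using cS by simp
  qed
  have tri: "\<exists>x\<in>S. \<exists>y\<in>S. \<exists>z\<in>S. x\<noteq>y \<and> y\<noteq>z \<and> x\<noteq>z \<and> {x,y}\<in>induced_edges E S \<and>
     {y,z}\<in>induced_edges E S \<and> {x,z}\<in>induced_edges E S" if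
    abc: "a \<in> {1..3}" "b \<in> {1..3}" "d \<in> {1..3::nat}" "a\<noteq>b" "b\<noteq>d" "a\<noteq>d" "sing a" "sing b" for a b d
  proof -
    have "{w a, w b} \<in> induced_edges E S \<and> {w b, w d} \<in> induced_edges E S \<and> {w a, w d} \<in> induced_edges E S"
      using tri_helper[OF w abc(1-6)] abc(7,8) unfolding sing_def by blast
    moreover have "w a \<noteq> w b" "w b \<noteq> w d" "w a \<noteq> w d" using w abc(1-6) by metis+
    moreover have "w a \<in> S" "w b \<in> S" "w d \<in> S" using w abc(1-3) by blast+
    ultimately show ?thesis by blast
  qed
  have "(sing 1 \<and> sing 2) \<or> (sing 1 \<and> sing 3) \<or> (sing 2 \<and> sing 3)"
    using key[of 1 2] key[of 1 3] key[of 2 3] by auto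
  hence "\<exists>x\<in>S. \<exists>y\<in>S. \<exists>z\<in>S. x\<noteq>y \<and> y\<noteq>z \<and> x\<noteq>z \<and> {x,y}\<in>induced_edges E S \<and>
     {y,z}\<in>induced_edges E S \<and> {x,z}\<in>induced_edges E S"
    using tri[of 1 2 3] tri[of 1 3 2] tri[of 2 3 1] by auto
  then obtain x y z where xyz: "x\<in>S" "y\<in>S" "z\<in>S" "x\<noteq>y" "y\<noteq>z" "x\<noteq>z"
    "{x,y}\<in>induced_edges E S" "{y,z}\<in>induced_edges E S" "{x,z}\<in>induced_edges E S" by blast
  have "{x,y}\<in>E" "{y,z}\<in>E" "{x,z}\<in>E" using xyz(7-9) unfolding induced_edges_def by auto
  moreover have "x \<in> A" "y \<in> A" "z \<in> A" using xyz(1-3) S(1) by auto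
  ultimately show ?thesis using xyz(4-6) by blast
qed

lemma atom_to_bcol:
  assumes "S \<subseteq> V" "b_atom S (induced_edges E S) 3" shows "bcol E V 3"
proof -
  let ?F = "induced_edges E S"
  obtain D :: "nat \<Rightarrow> 'a set" and cc :: "nat \<Rightarrow> 'a" where
    un: "(\<Union>i\<in>{1..3}. D i) = S" and
    dj: "\<forall>i\<in>{1..3}. \<forall>j\<in>{1..3}. i \<noteq> j \<longrightarrow> D i \<inter> D j = {}" and
    D: "\<forall>i\<in>{1..3}. cc i \<in> D i \<and> card (D i) \<le> 3 \<and> (\<forall>u\<in>D i. \<forall>w\<in>D i. {u, w} \<notin> ?F)" and
    nb: "\<forall>i\<in>{1..3}. \<forall>j\<in>{1..3}. i \<noteq> j \<longrightarrow> (\<exists>u\<in>D j. {cc i, u} \<in> ?F)"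
    using assms(2) unfolding b_atom_def by blast
  define col where "col x = (if x \<in> D 1 then 1 else if x \<in> D 2 then 2 else 3::nat)" for x
  have col: "col x = i" if "x \<in> D i" "i \<in> {1..3}" for x i
  proof -
    have "i = 1 \<or> i = 2 \<or> i = 3" using that(2) by auto
    moreover have "D 1 \<inter> D 2 = {}" "D 1 \<inter> D 3 = {}" "D 2 \<inter> D 3 = {}" using dj by auto
    ultimately show ?thesis using that(1) unfolding col_def by auto
  qed
  have inS: "x \<in> S" if "x \<in> D i" "i \<in> {1..3}" for x i using un that by blast
  have Sin: "\<exists>i\<in>{1..3}. x \<in> D i" if "x \<in> S" for x using un that by blast
  have "b_coloring S ?F col 3" unfolding b_coloring_def proper_coloring_def
  proof (intro conjI ballI impI)
    show "col ` S = {1..3}"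
    proof
      show "col ` S \<subseteq> {1..3}" unfolding col_def by auto
      show "{1..3} \<subseteq> col ` S"
      proof
        fix i :: nat assume i: "i \<in> {1..3}"
        hence "cc i \<in> D i" using D by blast
        hence "col (cc i) = i" "cc i \<in> S" using col[OF _ i] inS[OF _ i] by auto
        thus "i \<in> col ` S" by (metis image_eqI)
      qed
    qed
  next
    fix u w assume uw: "u \<in> S" "w \<in> S" "{u,w} \<in> ?F"
    obtain i where i: "i\<in>{1..3}" "u \<in> D i" using Sin[OF uw(1)] by blast
    obtain j where j: "j\<in>{1..3}" "w \<in> D j" using Sin[OF uw(2)] by blast
    have "i \<noteq> j" using D i j uw(3) by blast
    thus "col u \<noteq> col w" using col i j by simp
  next
    fix i :: nat assume i: "i \<in> {1..3}"
    have ci: "cc i \<in> D i" using D i by blast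
    have "b_vertex S ?F col 3 (cc i)" unfolding b_vertex_def
    proof (intro conjI ballI impI)
      show "cc i \<in> S" using inS[OF ci i] .
      fix j assume j: "j \<in> {1..3}" "j \<noteq> col (cc i)"
      hence "j \<noteq> i" using col[OF ci i] by simp
      hence "i \<noteq> j" by simp
      then obtain u where u: "u \<in> D j" "{cc i, u} \<in> ?F" using nb[rule_format, OF i j(1)] by blast
      show "\<exists>u\<in>S. {u, cc i} \<in> ?F \<and> col u = j"
        using u inS[OF u(1) j(1)] col[OF u(1) j(1)] by (metis insert_commute)
    qed
    thus "\<exists>v\<in>S. col v = i \<and> b_vertex S ?F col 3 v" using inS[OF ci i] col[OF ci i] by blast
  qed
  thus ?thesis unfolding bcol_def using assms(1) by blast
qed


lemma bcol_to_atom: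
  assumes "bcol E V 3" shows "\<exists>S. S \<subseteq> V \<and> b_atom S (induced_edges E S) 3"
proof -
  obtain S c where S: "S \<subseteq> V" "b_coloring S (induced_edges E S) c 3"
    using assms unfolding bcol_def by blast
  have prp: "\<forall>u\<in>S. \<forall>v\<in>S. {u,v} \<in> induced_edges E S \<longrightarrow> c u \<noteq> c v"
    using S(2) unfolding b_coloring_def proper_coloring_def by blast
  have "\<forall>j\<in>{1..3::nat}. \<exists>v. v\<in>S \<and> c v = j \<and> b_vertex S (induced_edges E S) c 3 v"
    using S(2) unfolding b_coloring_def by blast
  from bchoice[OF this] obtain w where
    w0: "\<forall>j\<in>{1..3::nat}. w j \<in> S \<and> c (w j) = j \<and> b_vertex S (induced_edges E S) c 3 (w j)" by blast
  hence w: "\<And>j. j \<in> {1..3} \<Longrightarrow> w j \<in> S \<and> c (w j) = j \<and> b_vertex S (induced_edges E S) c 3 (w j)"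
    by blast
  define nb where "nb i j = (SOME u. u\<in>S \<and> {u, w i} \<in> induced_edges E S \<and> c u = j)" for i j
  have nb: "nb i j \<in> S \<and> {nb i j, w i} \<in> induced_edges E S \<and> c (nb i j) = j"
    if ij: "i\<in>{1..3}" "j\<in>{1..3}" "i\<noteq>j" for i j
  proof -
    have "j \<noteq> c (w i)" using w[OF ij(1)] ij(3) by simp
    hence "\<exists>u\<in>S. {u, w i} \<in> induced_edges E S \<and> c u = j"
      using w[OF ij(1)] ij(2) unfolding b_vertex_def by blast
    hence "\<exists>u. u\<in>S \<and> {u, w i} \<in> induced_edges E S \<and> c u = j" by blast
    thus ?thesis unfolding nb_def by (rule someI_ex)
  qed
  define D where "D j = insert (w j) ((\<lambda>i. nb i j) ` ({1..3} - {j}))" for j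
  define S' where "S' = (\<Union>j\<in>{1..3}. D j)"
  have DS: "D j \<subseteq> S" if "j\<in>{1..3}" for j
  proof
    fix x assume "x \<in> D j"
    hence "x = w j \<or> (\<exists>i\<in>{1..3} - {j}. x = nb i j)" unfolding D_def by blast
    thus "x \<in> S"
    proof
      assume "x = w j" thus ?thesis using w[OF that] by blast
    next
      assume "\<exists>i\<in>{1..3} - {j}. x = nb i j"
      then obtain i where "i \<in> {1..3}" "i \<noteq> j" "x = nb i j" by blast
      thus ?thesis using nb[of i j] that by blast
    qed
  qed
  have Dcol: "c x = j" if "x \<in> D j" "j\<in>{1..3}" for x j
  proof -
    have "x = w j \<or> (\<exists>i\<in>{1..3} - {j}. x = nb i j)" using that(1) unfolding D_def by blast
    thus ?thesis
    proof
      assume "x = w j" thus ?thesis using w[OF that(2)] by blast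
    next
      assume "\<exists>i\<in>{1..3} - {j}. x = nb i j"
      then obtain i where "i \<in> {1..3}" "i \<noteq> j" "x = nb i j" by blast
      thus ?thesis using nb[of i j] that(2) by blast
    qed
  qed
  have S'S: "S' \<subseteq> S" using DS unfolding S'_def by blast
  have DS': "D j \<subseteq> S'" if "j\<in>{1..3}" for j using that unfolding S'_def by blast
  have "b_atom S' (induced_edges E S') 3" unfolding b_atom_def
  proof (intro exI conjI ballI impI)
    show "(\<Union>i\<in>{1..3}. D i) = S'" unfolding S'_def ..
  next
    fix i j :: nat assume ij: "i\<in>{1..3}" "j\<in>{1..3}" "i\<noteq>j"
    show "D i \<inter> D j = {}" using Dcol ij by blast
  next
    fix i :: nat assume i: "i\<in>{1..3}"
    show "w i \<in> D i" unfolding D_def by simp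
    have "card (D i) \<le> Suc (card ((\<lambda>i'. nb i' i) ` ({1..3} - {i})))"
      unfolding D_def by (simp add: card_insert_if)
    also have "\<dots> \<le> Suc (card ({1..3::nat} - {i}))" using card_image_le[of "{1..3::nat} - {i}" "\<lambda>i'. nb i' i"] by simp
    also have "\<dots> = 3" using i by simp
    finally show "card (D i) \<le> 3" .
  next
    fix i u v assume i: "i\<in>{1..3}" and uv: "u \<in> D i" "v \<in> D i"
    show "{u, v} \<notin> induced_edges E S'"
    proof
      assume "{u, v} \<in> induced_edges E S'"
      hence "{u, v} \<in> induced_edges E S" using S'S unfolding induced_edges_def by auto
      moreover have "u \<in> S" "v \<in> S" using uv DS[OF i] by auto
      ultimately have "c u \<noteq> c v" using prp by blast
      thus False using Dcol[OF uv(1) i] Dcol[OF uv(2) i] by simp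
    qed
  next
    fix i j :: nat assume ij: "i\<in>{1..3}" "j\<in>{1..3}" "i\<noteq>j"
    have inD: "nb i j \<in> D j" using ij unfolding D_def by auto
    have e: "{nb i j, w i} \<in> E" using nb[OF ij] unfolding induced_edges_def by auto
    have "w i \<in> S'" using DS'[OF ij(1)] unfolding D_def by auto
    moreover have "nb i j \<in> S'" using DS'[OF ij(2)] inD by auto
    ultimately have "{w i, nb i j} \<in> induced_edges E S'" using e
      unfolding induced_edges_def by (auto simp: insert_commute)
    thus "\<exists>u\<in>D j. {w i, u} \<in> induced_edges E S'" using inD by blast
  qed
  thus ?thesis using S'S S(1) by blast
qed

lemma graph_noloop: assumes "graph V E" shows "\<forall>u. {u} \<notin> E"
proof (intro allI notI)
  fix u assume "{u} \<in> E"
  then obtain a b where ab: "a \<noteq> b" "{u} = {a,b}" using assms unfolding graph_def by blast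
  have "a \<in> {u}" "b \<in> {u}" using ab(2) by auto
  thus False using ab(1) by simp
qed

lemma iso_clique:
  assumes G: "graph V E" and W: "finite W" and F: "\<And>x y. x\<in>W \<Longrightarrow> y\<in>W \<Longrightarrow> ({x,y}\<in>F \<longleftrightarrow> x\<noteq>y)"
  shows "graph_iso V E W F \<longleftrightarrow> card V = card W \<and> clique E V"
proof
  assume "graph_iso V E W F"
  then obtain f where f: "bij_betw f V W" "\<forall>u\<in>V. \<forall>v\<in>V. {u, v} \<in> E \<longleftrightarrow> {f u, f v} \<in> F"
    unfolding graph_iso_def by blast
  have "card V = card W" using bij_betw_same_card[OF f(1)] .
  moreover have "clique E V" unfolding clique_def
  proof (intro ballI impI)
    fix u w assume uw: "u\<in>V" "w\<in>V" "u\<noteq>w"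
    have "f u \<noteq> f w" using f(1) uw unfolding bij_betw_def inj_on_def by blast
    moreover have "f u \<in> W" "f w \<in> W" using f(1) uw unfolding bij_betw_def by auto
    ultimately have "{f u, f w} \<in> F" using F by blast
    thus "{u,w} \<in> E" using f(2) uw by blast
  qed
  ultimately show "card V = card W \<and> clique E V" ..
next
  assume a: "card V = card W \<and> clique E V"
  have fin: "finite V" using G unfolding graph_def by blast
  obtain f where f: "bij_betw f V W" using finite_same_card_bij[OF fin W] a by blast
  have nl: "\<forall>u. {u} \<notin> E" using graph_noloop[OF G] .
  have "\<forall>u\<in>V. \<forall>v\<in>V. {u, v} \<in> E \<longleftrightarrow> {f u, f v} \<in> F"
  proof (intro ballI)
    fix u v assume uv: "u\<in>V" "v\<in>V"
    have "{u,v} \<in> E \<longleftrightarrow> u \<noteq> v" using a nl uv unfolding clique_def by auto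
    moreover have "u \<noteq> v \<longleftrightarrow> f u \<noteq> f v" using f uv unfolding bij_betw_def inj_on_def by blast
    moreover have "f u \<in> W" "f v \<in> W" using f uv unfolding bij_betw_def by auto
    ultimately show "{u, v} \<in> E \<longleftrightarrow> {f u, f v} \<in> F" using F by blast
  qed
  thus "graph_iso V E W F" unfolding graph_iso_def using f by blast
qed

lemma P2_ok: "x\<in>P2_V \<Longrightarrow> y\<in>P2_V \<Longrightarrow> ({x,y}\<in>P2_E \<longleftrightarrow> x\<noteq>y)"
  unfolding P2_V_def P2_E_def by (elim insertE emptyE; simp add: doubleton_eq_iff)

lemma C3_ok: "x\<in>C3_V \<Longrightarrow> y\<in>C3_V \<Longrightarrow> ({x,y}\<in>C3_E \<longleftrightarrow> x\<noteq>y)"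
  unfolding C3_V_def C3_E_def by (elim insertE emptyE; simp add: doubleton_eq_iff)


lemma clique4:
  assumes "{x,y}\<in>E" "{x,z}\<in>E" "{x,t}\<in>E" "{y,z}\<in>E" "{y,t}\<in>E" "{z,t}\<in>E"
  shows "clique E {x,y,z,t}"
  unfolding clique_def using assms by (auto simp: insert_commute)

lemma clique3:
  assumes "{x,y}\<in>E" "{x,z}\<in>E" "{y,z}\<in>E"
  shows "clique E {x,y,z}"
  unfolding clique_def using assms by (auto simp: insert_commute)

lemma clique_sub: "clique E A \<Longrightarrow> B \<subseteq> A \<Longrightarrow> clique E B"
  unfolding clique_def by blast

lemma bcol_ind: "bcol (induced_edges E A) A k \<longleftrightarrow> bcol E A k"
proof
  assume "bcol (induced_edges E A) A k"
  then obtain S c where "S \<subseteq> A" "b_coloring S (induced_edges (induced_edges E A) S) c k"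
    unfolding bcol_def by blast
  thus "bcol E A k" unfolding bcol_def using ind_ind by metis
next
  assume "bcol E A k"
  then obtain S c where "S \<subseteq> A" "b_coloring S (induced_edges E S) c k"
    unfolding bcol_def by blast
  thus "bcol (induced_edges E A) A k" unfolding bcol_def using ind_ind by metis
qed

lemma noedge_le1:
  assumes "bcol E A k" "\<forall>u\<in>A. \<forall>w\<in>A. {u,w} \<notin> E" shows "k \<le> 1"
proof (rule ccontr)
  assume "\<not> k \<le> 1" hence "2 \<le> k" by simp
  thus False using bcol_two_edge[OF assms(1)] assms(2) by blast
qed

lemma tri4':
  assumes "\<exists>x\<in>A. \<exists>y\<in>A. \<exists>z\<in>A. x\<noteq>y \<and> y\<noteq>z \<and> x\<noteq>z \<and> {x,y}\<in>E \<and> {y,z}\<in>E \<and> {x,z}\<in>E"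
    "A = {p,q,r,s}"
  shows "({p,q}\<in>E \<and> {p,r}\<in>E \<and> {q,r}\<in>E) \<or> ({p,q}\<in>E \<and> {p,s}\<in>E \<and> {q,s}\<in>E) \<or>
         ({p,r}\<in>E \<and> {p,s}\<in>E \<and> {r,s}\<in>E) \<or> ({q,r}\<in>E \<and> {q,s}\<in>E \<and> {r,s}\<in>E)"
proof -
  obtain x y z where xyz: "x\<in>A" "y\<in>A" "z\<in>A" "x\<noteq>y" "y\<noteq>z" "x\<noteq>z" "{x,y}\<in>E" "{y,z}\<in>E" "{x,z}\<in>E"
    using assms(1) by blast
  show ?thesis using tri4[OF xyz(1-3)[unfolded assms(2)] xyz(4-9)] .
qed


theorem mainTheorem14:
  fixes V :: "'a set" and E :: "'a set set"
  assumes "graph V E" and "V \<noteq> {}"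
  shows "(\<forall>v\<in>V. int (b_chromatic_r (V - {v}) (del_edges E v))
              = int (b_chromatic_r V E) + int (card V div 2) - 2)
     \<longleftrightarrow> (graph_iso V E P2_V P2_E \<or> graph_iso V E C3_V C3_E
          \<or> (E = {} \<and> 4 \<le> card V \<and> card V \<le> 5)
          \<or> (4 \<le> card V \<and> card V \<le> 5 \<and> (\<exists>e1\<in>E. \<exists>e2\<in>E. e1 \<inter> e2 = {})
             \<and> \<not> (\<exists>S. S \<subseteq> V \<and> b_atom S (induced_edges E S) 3)))"
proof -
  have fin: "finite V" using assms(1) unfolding graph_def by blast
  have nl: "\<forall>u. {u} \<notin> E" using graph_noloop[OF assms(1)] .
  have gE: "\<forall>e\<in>E. \<exists>u v. u \<noteq> v \<and> u \<in> V \<and> v \<in> V \<and> e = {u, v}"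
    using assms(1) unfolding graph_def by blast
  have Ein: "u \<in> V \<and> w \<in> V \<and> u \<noteq> w" if uwE: "{u,w} \<in> E" for u w
  proof -
    obtain a b where ab: "a\<noteq>b" "a\<in>V" "b\<in>V" "{u,w} = {a,b}"
      using gE[rule_format, OF uwE] by blast
    have "u \<noteq> w" using uwE nl by auto
    moreover have "u \<in> {a,b}" "w \<in> {a,b}" using ab(4) by auto
    ultimately show ?thesis using ab by auto
  qed
  have edge2: "\<exists>a b. a \<noteq> b \<and> e = {a,b}" if eE: "e \<in> E" for e
    using gE[rule_format, OF eE] by blast
  have del: "del_edges E v = induced_edges E (V - {v})" for v
  proof
    show "del_edges E v \<subseteq> induced_edges E (V - {v})"
    proof
      fix e assume e: "e \<in> del_edges E v"
      then obtain a b where "a\<noteq>b" "e = {a,b}" using edge2 unfolding del_edges_def by blast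
      moreover have "a \<in> V" "b \<in> V" using Ein e calculation unfolding del_edges_def by auto
      ultimately show "e \<in> induced_edges E (V - {v})" using e
        unfolding del_edges_def induced_edges_def by auto
    qed
    show "induced_edges E (V - {v}) \<subseteq> del_edges E v"
      unfolding del_edges_def induced_edges_def by auto
  qed
  have nlA: "\<forall>u. {u} \<notin> induced_edges E A" for A using nl unfolding induced_edges_def by auto
  define p where "p = b_chromatic_r V E"
  define q where "q v = b_chromatic_r (V - {v}) (del_edges E v)" for v
  define n where "n = card V"
  have pw: "bcol E V p" unfolding p_def using phir_wit[OF fin nl] .
  have pge: "k \<le> p" if "bcol E V k" for k unfolding p_def using phir_ge[OF fin that] .
  have qw: "bcol E (V-{v}) (q v)" for v
    using phir_wit[OF finite_Diff[OF fin, of "{v}"] nlA[of "V - {v}"]] unfolding q_def del bcol_ind .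
  have qge: "k \<le> q v" if "bcol E (V-{v}) k" for v k
    using phir_ge[OF finite_Diff[OF fin, of "{v}"], of "induced_edges E (V - {v})" k] that
    unfolding q_def del bcol_ind by blast
  obtain a0 where a0: "a0 \<in> V" using assms(2) by blast
  have p1: "1 \<le> p" using pge[OF bcol_one[OF a0 nl]] .
  have qle: "q v \<le> p" for v using pge[OF bcol_mono[OF qw Diff_subset]] .
  have qge1: "p - 1 \<le> q v" for v using qge[OF bcol_down[OF pw p1]] .
  have pcard: "p \<le> n" unfolding n_def using bcol_card[OF fin pw] .
  have qcard: "q v \<le> n - 1" if "v \<in> V" for v
    using bcol_card[OF finite_Diff[OF fin] qw[of v]] that fin unfolding n_def by simp
  have p_clique: "clique E V \<longleftrightarrow> n \<le> p"
  proof
    assume "clique E V" thus "n \<le> p" unfolding n_def using pge[OF clique_bcol[OF fin nl]] by blast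
  next
    assume "n \<le> p" thus "clique E V" using bcol_clique[OF fin pw] unfolding n_def by blast
  qed
  have q_one: "1 \<le> q v" if "v \<in> V" "2 \<le> n" for v
  proof -
    have "V - {v} \<noteq> {}"
    proof
      assume "V - {v} = {}" hence "V \<subseteq> {v}" by blast
      hence "n \<le> 1" unfolding n_def using card_mono[of "{v}" V] by simp
      thus False using that by simp
    qed
    then obtain x where "x \<in> V - {v}" by blast
    thus ?thesis using qge[OF bcol_one[OF _ nl]] by blast
  qed
  have q_edge: "2 \<le> q v" if "{x,y} \<in> E" "v \<noteq> x" "v \<noteq> y" for v x y
  proof -
    have "x \<in> V - {v}" "y \<in> V - {v}" "x \<noteq> y" using Ein[OF that(1)] that by auto
    thus ?thesis using qge[OF bcol_edge[OF that(1) _ _ _ nl]] by blast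
  qed
  have p_edge: "2 \<le> p" if "{x,y} \<in> E" for x y
    using pge[OF bcol_edge[OF that _ _ _ nl]] Ein[OF that] by blast
  have noedge: "p \<le> 1" if "E = {}"
    using noedge_le1[OF pw] that by blast
  have atom: "(\<exists>S. S \<subseteq> V \<and> b_atom S (induced_edges E S) 3) \<longleftrightarrow> 3 \<le> p"
  proof
    assume "\<exists>S. S \<subseteq> V \<and> b_atom S (induced_edges E S) 3"
    thus "3 \<le> p" using atom_to_bcol pge by blast
  next
    assume "3 \<le> p" thus "\<exists>S. S \<subseteq> V \<and> b_atom S (induced_edges E S) 3"
      using bcol_to_atom bcol_down_le[OF pw] by blast
  qed
  have P2f: "finite P2_V" "card P2_V = 2" by (simp_all add: P2_V_def)
  have C3f: "finite C3_V" "card C3_V = 3" by (simp_all add: C3_V_def)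
  have isoP2: "graph_iso V E P2_V P2_E \<longleftrightarrow> n = 2 \<and> clique E V"
    using iso_clique[OF assms(1) P2f(1) P2_ok] P2f(2) unfolding n_def by simp
  have isoC3: "graph_iso V E C3_V C3_E \<longleftrightarrow> n = 3 \<and> clique E V"
    using iso_clique[OF assms(1) C3f(1) C3_ok] C3f(2) unfolding n_def by simp
  have n1: "1 \<le> n"
  proof -
    have "0 < card V" using a0 fin card_gt_0_iff by blast
    thus ?thesis unfolding n_def by simp
  qed
  define L where "L \<longleftrightarrow> (\<forall>v\<in>V. int (q v) = int p + int (n div 2) - 2)"
  define R where "R \<longleftrightarrow> (graph_iso V E P2_V P2_E \<or> graph_iso V E C3_V C3_E
          \<or> (E = {} \<and> 4 \<le> n \<and> n \<le> 5)
          \<or> (4 \<le> n \<and> n \<le> 5 \<and> (\<exists>e1\<in>E. \<exists>e2\<in>E. e1 \<inter> e2 = {})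
             \<and> \<not> (\<exists>S. S \<subseteq> V \<and> b_atom S (induced_edges E S) 3)))"
  have "L \<longleftrightarrow> R"
  proof (cases "6 \<le> n")
    case True
    have "\<not> L"
    proof
      assume L
      hence eq: "int (q a0) = int p + int (n div 2) - 2" using a0 unfolding L_def by blast
      have "6 div 2 \<le> n div 2" using div_le_mono[OF True] .
      hence "3 \<le> n div 2" by simp
      thus False using eq qle[of a0] by linarith
    qed
    moreover have "\<not> R" unfolding R_def isoP2 isoC3 using True by auto
    ultimately show ?thesis by blast
  next
    case False
    hence "n = 1 \<or> n = 2 \<or> n = 3 \<or> n = 4 \<or> n = 5" using n1 by auto
    then consider "n = 1" | "n = 2" | "n = 3" | "n = 4 \<or> n = 5" by blast
    then show ?thesis
    proof cases
      case 1
      have "\<not> L"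
      proof
        assume L
        hence eq: "int (q a0) = int p + int (n div 2) - 2" using a0 unfolding L_def by blast
        have "p \<le> q a0 + 1" using qge1[of a0] p1 by simp
        thus False using eq 1 by simp
      qed
      moreover have "\<not> R" unfolding R_def isoP2 isoC3 using 1 by auto
      ultimately show ?thesis by blast
    next
      case 2
      have qv: "q v = 1" if "v \<in> V" for v using q_one[OF that] qcard[OF that] 2 by simp
      have "L \<longleftrightarrow> p = 2" unfolding L_def using qv 2 a0 by auto
      moreover have "R \<longleftrightarrow> clique E V" unfolding R_def isoP2 isoC3 using 2 by simp
      moreover have "clique E V \<longleftrightarrow> p = 2" using p_clique pcard 2 by auto
      ultimately show ?thesis by blast
    next
      case 3
      have Lq: "L \<longleftrightarrow> (\<forall>v\<in>V. int (q v) = int p - 1)" unfolding L_def using 3 by simp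
      have Rq: "R \<longleftrightarrow> clique E V" unfolding R_def isoP2 isoC3 using 3 by simp
      show ?thesis
      proof (cases "clique E V")
        case True
        have p3: "p = 3" using p_clique True pcard 3 by simp
        have "q v = 2" if v: "v \<in> V" for v
        proof -
          have c: "card (V - {v}) = 2" using card_Diff_singleton[OF v] 3 unfolding n_def by simp
          have "clique E (V - {v})" using clique_sub[OF True] by blast
          hence "card (V - {v}) \<le> q v" using qge[OF clique_bcol[OF finite_Diff[OF fin] nl]] by blast
          thus ?thesis using c qcard[OF v] 3 by simp
        qed
        hence L using Lq p3 by simp
        thus ?thesis using Rq True by blast
      next
        case False
        have pl: "p \<le> 2" using p_clique False 3 by simp
        have "\<not> L"
        proof (cases "\<exists>x y. {x,y} \<in> E")
          case True
          then obtain x y where xy: "{x,y} \<in> E" by blast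
          have xyV: "x \<in> V" "y \<in> V" using Ein[OF xy] by auto
          have "V - {x,y} \<noteq> {}"
          proof
            assume "V - {x,y} = {}" hence "V \<subseteq> {x,y}" by blast
            hence "n \<le> card {x,y}" unfolding n_def using card_mono[of "{x,y}" V] by simp
            also have "\<dots> \<le> 2" by (simp add: card_insert_le_m1)
            finally show False using 3 by simp
          qed
          then obtain z where z: "z \<in> V" "z \<noteq> x" "z \<noteq> y" by blast
          have "2 \<le> q z" using q_edge[OF xy] z by metis
          thus "\<not> L" using Lq z pl by fastforce
        next
          case False
          hence "\<forall>u\<in>V. \<forall>w\<in>V. {u,w} \<notin> E" by blast
          hence "p \<le> 1" using noedge_le1[OF pw] by blast
          moreover have "1 \<le> q a0" using q_one[OF a0] 3 by simp
          ultimately show "\<not> L" using Lq a0 p1 by fastforce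
        qed
        thus ?thesis using Rq False by blast
      qed
    next
      case 4
      have Lq: "L \<longleftrightarrow> (\<forall>v\<in>V. q v = p)" unfolding L_def using 4 by auto
      have Rq: "R \<longleftrightarrow> (E = {} \<or> ((\<exists>e1\<in>E. \<exists>e2\<in>E. e1 \<inter> e2 = {}) \<and> p < 3))"
        unfolding R_def isoP2 isoC3 atom using 4 by auto
      show ?thesis
      proof
        assume R
        hence "E = {} \<or> ((\<exists>e1\<in>E. \<exists>e2\<in>E. e1 \<inter> e2 = {}) \<and> p < 3)" using Rq by blast
        thus L
        proof
          assume E0: "E = {}"
          have "p = 1" using noedge[OF E0] p1 by simp
          moreover have "1 \<le> q v" if "v\<in>V" for v using q_one[OF that] 4 by auto
          ultimately show L unfolding Lq using qle by (metis le_antisym)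
        next
          assume "(\<exists>e1\<in>E. \<exists>e2\<in>E. e1 \<inter> e2 = {}) \<and> p < 3"
          then obtain e1 e2 where e: "e1\<in>E" "e2\<in>E" "e1 \<inter> e2 = {}" and p3: "p < 3" by blast
          obtain x1 y1 where 1: "e1 = {x1,y1}" using edge2[OF e(1)] by blast
          obtain x2 y2 where 2: "e2 = {x2,y2}" using edge2[OF e(2)] by blast
          have p2: "2 \<le> p" using p_edge e(1) 1 by blast
          have "2 \<le> q v" if "v \<in> V" for v
          proof (cases "v \<in> e1")
            case True
            hence "v \<noteq> x2" "v \<noteq> y2" using e(3) 2 by auto
            thus ?thesis using q_edge e(2) 2 by blast
          next
            case False
            hence "v \<noteq> x1" "v \<noteq> y1" using 1 by auto
            thus ?thesis using q_edge e(1) 1 by blast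
          qed
          thus L unfolding Lq using qle p2 p3 by (metis le_antisym less_Suc_eq_le numeral_3_eq_3 numeral_2_eq_2 le_SucE)
        qed
      next
        assume L
        hence A: "\<forall>v\<in>V. q v = p" using Lq by blast
        show R
        proof (cases "E = {}")
          case True thus R using Rq by blast
        next
          case Ene: False
          have p3: "p < 3"
          proof (rule ccontr)
            assume "\<not> p < 3" hence p3: "3 \<le> p" by simp
            have pn: "p < n"
            proof (rule ccontr)
              assume "\<not> p < n"
              thus False using A a0 qcard[OF a0] 4 by fastforce
            qed
            have pn1: "p \<noteq> n - 1"
            proof
              assume pn1: "p = n - 1"
              have cl: "clique E (V - {v})" if v: "v \<in> V" for v
              proof -
                have "card (V - {v}) = n - 1" using card_Diff_singleton[OF v] unfolding n_def by simp
                hence "card (V - {v}) \<le> q v" using A v pn1 by simp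
                thus ?thesis using bcol_clique[OF finite_Diff[OF fin] qw] by blast
              qed
              have "clique E V" unfolding clique_def
              proof (intro ballI impI)
                fix u w assume uw: "u \<in> V" "w \<in> V" "u \<noteq> w"
                have "V - {u,w} \<noteq> {}"
                proof
                  assume "V - {u,w} = {}" hence "V \<subseteq> {u,w}" by blast
                  hence "n \<le> card {u,w}" unfolding n_def using card_mono[of "{u,w}" V] by simp
                  also have "\<dots> \<le> 2" by (simp add: card_insert_le_m1)
                  finally show False using 4 by auto
                qed
                then obtain z where z: "z \<in> V" "z \<noteq> u" "z \<noteq> w" by blast
                show "{u,w} \<in> E" using cl[OF z(1)] uw z unfolding clique_def by blast
              qed
              thus False using p_clique pn by simp
            qed
            have n5: "n = 5" and pp: "p = 3" using p3 pn pn1 4 by auto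
            have noK4: "\<not> ({x,y}\<in>E \<and> {x,z}\<in>E \<and> {x,t}\<in>E \<and> {y,z}\<in>E \<and> {y,t}\<in>E \<and> {z,t}\<in>E)"
              if K: "x\<in>V" "y\<in>V" "z\<in>V" "t\<in>V" "distinct [x,y,z,t]" for x y z t
            proof
              assume "{x,y}\<in>E \<and> {x,z}\<in>E \<and> {x,t}\<in>E \<and> {y,z}\<in>E \<and> {y,t}\<in>E \<and> {z,t}\<in>E"
              hence cl: "clique E {x,y,z,t}" by (simp add: clique4)
              have "card {x,y,z,t} = 4" using K(5) by simp
              hence "bcol E {x,y,z,t} 4" using clique_bcol[OF _ nl cl] by simp
              moreover have "{x,y,z,t} \<subseteq> V" using K by simp
              ultimately have "4 \<le> p" using pge bcol_mono by blast
              thus False using pp by simp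
            qed
            have triV: "\<exists>x\<in>V-{v}. \<exists>y\<in>V-{v}. \<exists>z\<in>V-{v}. x\<noteq>y \<and> y\<noteq>z \<and> x\<noteq>z \<and> {x,y}\<in>E \<and> {y,z}\<in>E \<and> {x,z}\<in>E"
              if v: "v \<in> V" for v
            proof -
              have "card (V - {v}) = 4" using card_Diff_singleton[OF v] n5 unfolding n_def by simp
              moreover have "bcol E (V - {v}) 3" using qw[of v] A v pp by simp
              ultimately show ?thesis using bcol3_small[OF finite_Diff[OF fin]] by simp
            qed
            have n5': "card V = 5" using n5 unfolding n_def .
            obtain a b c d e where ve: "V = {a,b,c,d,e} \<and> distinct [a,b,c,d,e]"
              using card5[OF n5'] by iprover
            have Veq: "V = {a,b,c,d,e}" and dist: "distinct [a,b,c,d,e]" using ve by auto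
            have inV: "a\<in>V" "b\<in>V" "c\<in>V" "d\<in>V" "e\<in>V" using Veq by auto
            have ta: "V - {a} = {b,c,d,e}" using Veq dist by auto
            have tb: "V - {b} = {a,c,d,e}" using Veq dist by auto
            have tc: "V - {c} = {a,b,d,e}" using Veq dist by auto
            have td: "V - {d} = {a,b,c,e}" using Veq dist by auto
            have te: "V - {e} = {a,b,c,d}" using Veq dist by auto
            show False
              using five_core[OF tri4'[OF triV[OF inV(1)] ta] tri4'[OF triV[OF inV(2)] tb]
                  tri4'[OF triV[OF inV(3)] tc] tri4'[OF triV[OF inV(4)] td] tri4'[OF triV[OF inV(5)] te]
                  noK4[of b c d e] noK4[of a c d e] noK4[of a b d e] noK4[of a b c e] noK4[of a b c d]]
                inV dist by simp
          qed
          have k2: "\<exists>e1\<in>E. \<exists>e2\<in>E. e1 \<inter> e2 = {}"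
          proof (rule ccontr)
            assume nk: "\<not> (\<exists>e1\<in>E. \<exists>e2\<in>E. e1 \<inter> e2 = {})"
            obtain e where eE: "e \<in> E" using Ene by blast
            obtain a b where ab: "a \<noteq> b" "e = {a,b}" using edge2[OF eE] by blast
            have abE: "{a,b} \<in> E" using eE ab by simp
            have p2: "2 \<le> p" using p_edge[OF abE] .
            have aV: "a \<in> V" "b \<in> V" using Ein[OF abE] by auto
            have qlow: "q v \<le> 1" if allv: "\<forall>f\<in>E. v \<in> f" for v
            proof -
              have "\<forall>u\<in>V-{v}. \<forall>w\<in>V-{v}. {u,w} \<notin> E"
              proof (intro ballI notI)
                fix u w assume uw: "u\<in>V-{v}" "w\<in>V-{v}" "{u,w}\<in>E"
                have "v \<in> {u,w}" using allv uw(3) by (rule bspec)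
                thus False using uw(1,2) by auto
              qed
              thus ?thesis using noedge_le1[OF qw] by blast
            qed
            have "\<not>(\<forall>f\<in>E. a \<in> f)"
            proof
              assume "\<forall>f\<in>E. a \<in> f" hence "q a \<le> 1" by (rule qlow)
              moreover have "q a = p" using A aV(1) by blast
              ultimately show False using p2 by simp
            qed
            then obtain e1 where e1: "e1 \<in> E" "a \<notin> e1" by blast
            have "\<not>(\<forall>f\<in>E. b \<in> f)"
            proof
              assume "\<forall>f\<in>E. b \<in> f" hence "q b \<le> 1" by (rule qlow)
              moreover have "q b = p" using A aV(2) by blast
              ultimately show False using p2 by simp
            qed
            then obtain e2 where e2: "e2 \<in> E" "b \<notin> e2" by blast
            have "e1 \<inter> e \<noteq> {}" using nk e1(1) eE by blast
            hence be1: "b \<in> e1" using ab(2) e1(2) by auto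
            have "e2 \<inter> e \<noteq> {}" using nk e2(1) eE by blast
            hence ae2: "a \<in> e2" using ab(2) e2(2) by auto
            obtain x where x: "e1 = {b,x}"
            proof -
              obtain u1 w1 where eq: "e1 = {u1,w1}" using edge2[OF e1(1)] by blast
              have "b = u1 \<or> b = w1" using be1 eq by auto
              thus ?thesis
              proof
                assume "b = u1" thus ?thesis by (intro that[of w1]) (simp add: eq)
              next
                assume "b = w1" thus ?thesis by (intro that[of u1]) (simp add: eq insert_commute)
              qed
            qed
            obtain y where y: "e2 = {a,y}"
            proof -
              obtain u1 w1 where eq: "e2 = {u1,w1}" using edge2[OF e2(1)] by blast
              have "a = u1 \<or> a = w1" using ae2 eq by auto
              thus ?thesis
              proof
                assume "a = u1" thus ?thesis by (intro that[of w1]) (simp add: eq)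
              next
                assume "a = w1" thus ?thesis by (intro that[of u1]) (simp add: eq insert_commute)
              qed
            qed
            have "e1 \<inter> e2 \<noteq> {}" using nk e1 e2 by blast
            hence xy: "x = y" using x y e1(2) e2(2) by auto
            have bx: "{b,x} \<in> E" using e1 x by simp
            have ax: "{a,x} \<in> E" using e2 y xy by simp
            have d: "distinct [a,b,x]" using ab(1) e1(2) x Ein[OF bx] by auto
            have cl: "clique E {a,b,x}" using clique3[OF abE ax bx] .
            have "card {a,b,x} = 3" using d by simp
            hence "bcol E {a,b,x} 3" using clique_bcol[OF _ nl cl] by simp
            moreover have "{a,b,x} \<subseteq> V" using aV Ein[OF bx] by simp
            ultimately have "3 \<le> p" using pge bcol_mono by blast
            thus False using p3 by simp
          qed
          show R using Rq k2 p3 by blast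
        qed
      qed
    qed
  qed
  thus ?thesis unfolding L_def R_def q_def p_def n_def .
qed

end
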